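(* Let $\sigma=(\sigma_j)_{j=1}^\infty$ be a strictly decreasing sequence of real numbers with $\sigma_j\to0$, and let $\mathcal{K}(\sigma)=\{\sigma_je_j\}_{j=1}^\infty\cup\{0\}\subset c_0$. Let $n\ge1$ and $\gamma>0$. If $\sigma_1\le\gamma/2$ and there is $N\in\mathbb{N}\cup\{\infty\}$ such that $\sum_{j=1}^N\sigma_j^n\le(\gamma/2)^n$, then $d_n^\gamma(\mathcal{K}(\sigma))_{c_0}\le\sigma_N$, where $\sigma_\infty:=0$.
   Context: $c_0$ denotes the Banach space of real sequences converging to $0$ with the norm $\|x\|=\sup_j|x_j|$, and $(e_j)$ is its standard unit vector basis. For $k\ge1$ and a norm $\|\cdot\|_{Y_k}$ on $\mathbb{R}^k$ let $B_{Y_k}=\{y\in\mathbb{R}^k:\|y\|_{Y_k}\le1\}$. For $\mathcal{K}\subset c_0$ and $\gamma\ge0$, $d^\gamma(\mathcal{K},Y_k)_{c_0}=\inf_{\Phi}\sup_{f\in\mathcal{K}}\inf_{y\in B_{Y_k}}\|f-\Phi(y)\|$, the infimum over all maps $\Phi:B_{Y_k}\to c_0$ with $\|\Phi(y)-\Phi(y')\|\le\gamma\|y-y'\|_{Y_k}$ for all $y,y'\in B_{Y_k}$, and the Lipschitz width is $d_n^\gamma(\mathcal{K})_{c_0}=\inf_{1\le k\le n}\inf_{\|\cdot\|_{Y_k}}d^\gamma(\mathcal{K},Y_k)_{c_0}$, the inner infimum over all norms on $\mathbb{R}^k$. *)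

theory Defs
  imports "HOL-Analysis.Analysis"
begin

text \<open>The space c_0, realised as real sequences indexed by nat (index i corresponds
  to the paper's coordinate i+1) converging to 0, with the sup norm.\<close>

definition c0 :: "(nat \<Rightarrow> real) set" where
  "c0 = {x. x \<longlonglongrightarrow> 0}"

definition c0norm :: "(nat \<Rightarrow> real) \<Rightarrow> real" where
  "c0norm x = (SUP j. \<bar>x j\<bar>)"

text \<open>Standard unit vector basis (0-based: unitvec j is the paper's e_(j+1)).\<close>
definition unitvec :: "nat \<Rightarrow> nat \<Rightarrow> real" where
  "unitvec j = (\<lambda>i. if i = j then 1 else 0)"

definition Rk :: "nat \<Rightarrow> (nat \<Rightarrow> real) set" where
  "Rk k = {y. \<forall>i\<ge>k. y i = 0}"

definition is_norm_on :: "nat \<Rightarrow> ((nat \<Rightarrow> real) \<Rightarrow> real) \<Rightarrow> bool" where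
  "is_norm_on k Nm \<longleftrightarrow>
     (\<forall>y\<in>Rk k. 0 \<le> Nm y) \<and>
     (\<forall>y\<in>Rk k. Nm y = 0 \<longleftrightarrow> y = (\<lambda>i. 0)) \<and>
     (\<forall>y\<in>Rk k. \<forall>c::real. Nm (\<lambda>i. c * y i) = \<bar>c\<bar> * Nm y) \<and>
     (\<forall>y\<in>Rk k. \<forall>z\<in>Rk k. Nm (\<lambda>i. y i + z i) \<le> Nm y + Nm z)"

definition unit_ball_Y :: "nat \<Rightarrow> ((nat \<Rightarrow> real) \<Rightarrow> real) \<Rightarrow> (nat \<Rightarrow> real) set" where
  "unit_ball_Y k Nm = {y \<in> Rk k. Nm y \<le> 1}"

definition lip_maps :: "real \<Rightarrow> nat \<Rightarrow> ((nat \<Rightarrow> real) \<Rightarrow> real)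
    \<Rightarrow> ((nat \<Rightarrow> real) \<Rightarrow> (nat \<Rightarrow> real)) set" where
  "lip_maps \<gamma> k Nm = {\<Phi>. \<Phi> ` unit_ball_Y k Nm \<subseteq> c0 \<and>
     (\<forall>y\<in>unit_ball_Y k Nm. \<forall>y'\<in>unit_ball_Y k Nm.
        c0norm (\<lambda>i. \<Phi> y i - \<Phi> y' i) \<le> \<gamma> * Nm (\<lambda>i. y i - y' i))}"

definition dgamma :: "real \<Rightarrow> (nat \<Rightarrow> real) set \<Rightarrow> nat \<Rightarrow> ((nat \<Rightarrow> real) \<Rightarrow> real) \<Rightarrow> ereal" where
  "dgamma \<gamma> K k Nm = (INF \<Phi> \<in> lip_maps \<gamma> k Nm. SUP f \<in> K. INF y \<in> unit_ball_Y k Nm.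
      ereal (c0norm (\<lambda>i. f i - \<Phi> y i)))"

definition lip_width :: "real \<Rightarrow> nat \<Rightarrow> (nat \<Rightarrow> real) set \<Rightarrow> ereal" where
  "lip_width \<gamma> n K = (INF k \<in> {1..n}. INF Nm \<in> {Nm. is_norm_on k Nm}. dgamma \<gamma> K k Nm)"

definition Ksigma :: "(nat \<Rightarrow> real) \<Rightarrow> (nat \<Rightarrow> real) set" where
  "Ksigma \<sigma> = (\<lambda>j. (\<lambda>i. \<sigma> j * unitvec j i)) ` UNIV \<union> {(\<lambda>i. 0)}"

end

theory Submission
  imports Defs
begin


lemma exists_point:
  fixes n :: nat and I :: "nat set" and p :: "nat \<Rightarrow> nat \<Rightarrow> real" and r :: "nat \<Rightarrow> real" and a :: real
  assumes n: "n \<ge> 1" and fin: "finite I" and rpos: "\<And>i. i \<in> I \<Longrightarrow> 0 \<le> r i"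
    and rsum: "(\<Sum>i\<in>I. (2 * r i) ^ n) \<le> 1" and a: "0 \<le> a" "a \<le> 1/2"
  shows "\<exists>x. x \<in> Rk n \<and> (\<forall>l<n. -1 \<le> x l \<and> x l \<le> 1 - a) \<and> (\<forall>i\<in>I. \<exists>l<n. r i \<le> \<bar>x l - p i l\<bar>)"
proof (rule ccontr)
  assume H: "\<not> ?thesis"
  interpret product_sigma_finite "\<lambda>_. lborel" by standard
  define M where "M = PiM {..<n} (\<lambda>_. lborel::real measure)"
  define A where "A = PiE {..<n} (\<lambda>_. {-1..1-a})"
  define B where "B i = PiE {..<n} (\<lambda>l. {p i l - r i <..< p i l + r i})" for i
  have sub: "A \<subseteq> (\<Union>i\<in>I. B i)"
  proof
    fix x assume xA: "x \<in> A"
    define x' where "x' = (\<lambda>l. if l < n then x l else 0)"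
    have "x' \<in> Rk n" by (simp add: x'_def Rk_def)
    moreover have "\<forall>l<n. -1 \<le> x' l \<and> x' l \<le> 1 - a" using xA by (auto simp: A_def x'_def)
    ultimately obtain i where i: "i \<in> I" "\<forall>l<n. \<bar>x' l - p i l\<bar> < r i" using H by force
    have "x \<in> B i" using xA i by (auto simp: A_def B_def x'_def PiE_def Pi_def abs_less_iff)
    then show "x \<in> (\<Union>i\<in>I. B i)" using i by auto
  qed
  have mA: "emeasure M A = ennreal ((2 - a) ^ n)"
    unfolding M_def A_def using a
    by (subst emeasure_PiM) (auto simp: ennreal_power)
  have mB: "emeasure M (B i) = ennreal ((2 * r i) ^ n)" if "i \<in> I" for i
    unfolding M_def B_def using rpos[OF that]
    by (subst emeasure_PiM) (auto simp: ennreal_power)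
  have "emeasure M A \<le> emeasure M (\<Union>i\<in>I. B i)"
    by (rule emeasure_mono[OF sub]) (auto simp: M_def B_def intro!: sets.finite_UN fin)
  also have "\<dots> \<le> (\<Sum>i\<in>I. emeasure M (B i))"
    by (rule emeasure_subadditive_finite[OF fin]) (auto simp: M_def B_def)
  also have "\<dots> = (\<Sum>i\<in>I. ennreal ((2 * r i) ^ n))" using mB by simp
  also have "\<dots> = ennreal (\<Sum>i\<in>I. (2 * r i) ^ n)"
    by (rule sum_ennreal) (use rpos in auto)
  finally have X: "ennreal ((2 - a) ^ n) \<le> ennreal (\<Sum>i\<in>I. (2 * r i) ^ n)"
    using mA by simp
  have snn: "0 \<le> (\<Sum>i\<in>I. (2 * r i) ^ n)" by (intro sum_nonneg) (simp add: rpos)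
  have "(2 - a) ^ n \<le> (\<Sum>i\<in>I. (2 * r i) ^ n)"
    using X by (subst (asm) ennreal_le_iff[OF snn])
  moreover have "(3/2::real) \<le> (2 - a) ^ n"
  proof -
    have "(3/2::real) \<le> (3/2) ^ n" by (rule self_le_power) (use n in auto)
    also have "\<dots> \<le> (2 - a) ^ n" using a by (intro power_mono) auto
    finally show ?thesis .
  qed
  ultimately show False using rsum by linarith
qed

definition mnorm :: "nat \<Rightarrow> (nat \<Rightarrow> real) \<Rightarrow> real" where
  "mnorm n y = Max ((\<lambda>i. \<bar>y i\<bar>) ` {..<n})"

lemma mnorm_ge: "l < n \<Longrightarrow> \<bar>y l\<bar> \<le> mnorm n y"
  unfolding mnorm_def by (rule Max_ge) auto

lemma mnorm_le: "n \<ge> 1 \<Longrightarrow> (\<And>l. l < n \<Longrightarrow> \<bar>y l\<bar> \<le> c) \<Longrightarrow> mnorm n y \<le> c"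
  unfolding mnorm_def by (subst Max_le_iff) (auto simp: lessThan_empty_iff)

lemma mnorm_nonneg: "n \<ge> 1 \<Longrightarrow> 0 \<le> mnorm n y"
  using mnorm_ge[of 0 n y] by auto

lemma mnorm_zero: "n \<ge> 1 \<Longrightarrow> mnorm n (\<lambda>l. 0) = 0"
  using mnorm_le[of n "\<lambda>l. 0" 0] mnorm_nonneg[of n "\<lambda>l. 0"] by auto

lemma mnorm_triangle: "n \<ge> 1 \<Longrightarrow> mnorm n (\<lambda>i. a i + b i) \<le> mnorm n a + mnorm n b"
proof (rule mnorm_le)
  fix l assume "l < n"
  then have "\<bar>a l\<bar> \<le> mnorm n a" "\<bar>b l\<bar> \<le> mnorm n b" by (auto intro: mnorm_ge)
  then show "\<bar>a l + b l\<bar> \<le> mnorm n a + mnorm n b" by linarith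
qed

lemma mnorm_scale: assumes n: "n \<ge> 1" shows "mnorm n (\<lambda>i. c * y i) = \<bar>c\<bar> * mnorm n y"
proof (rule antisym)
  show "mnorm n (\<lambda>i. c * y i) \<le> \<bar>c\<bar> * mnorm n y"
    by (rule mnorm_le[OF n]) (auto simp: abs_mult intro!: mult_left_mono mnorm_ge)
next
  show "\<bar>c\<bar> * mnorm n y \<le> mnorm n (\<lambda>i. c * y i)"
  proof (cases "c = 0")
    case True then show ?thesis using mnorm_nonneg[OF n] by simp
  next
    case False
    have "mnorm n y \<le> mnorm n (\<lambda>i. c * y i) / \<bar>c\<bar>"
    proof (rule mnorm_le[OF n])
      fix l assume "l < n"
      then have "\<bar>c * y l\<bar> \<le> mnorm n (\<lambda>i. c * y i)" by (rule mnorm_ge)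
      then show "\<bar>y l\<bar> \<le> mnorm n (\<lambda>i. c * y i) / \<bar>c\<bar>" using False
        by (simp add: abs_mult field_simps)
    qed
    then show ?thesis using False by (simp add: field_simps)
  qed
qed

lemma mnorm_diff: assumes n: "n \<ge> 1"
  shows "\<bar>mnorm n (\<lambda>i. y i - c i) - mnorm n (\<lambda>i. y' i - c i)\<bar> \<le> mnorm n (\<lambda>i. y i - y' i)"
proof -
  have 1: "mnorm n (\<lambda>i. y i - c i) \<le> mnorm n (\<lambda>i. y i - y' i) + mnorm n (\<lambda>i. y' i - c i)"
    using mnorm_triangle[OF n, of "\<lambda>i. y i - y' i" "\<lambda>i. y' i - c i"] by simp
  have 2: "mnorm n (\<lambda>i. y' i - c i) \<le> mnorm n (\<lambda>i. y' i - y i) + mnorm n (\<lambda>i. y i - c i)"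
    using mnorm_triangle[OF n, of "\<lambda>i. y' i - y i" "\<lambda>i. y i - c i"] by simp
  have 3: "mnorm n (\<lambda>i. y' i - y i) = mnorm n (\<lambda>i. y i - y' i)"
    unfolding mnorm_def by (simp add: abs_minus_commute)
  show ?thesis using 1 2 3 by linarith
qed

lemma mnorm_is_norm: assumes n: "n \<ge> 1" shows "is_norm_on n (mnorm n)"
  unfolding is_norm_on_def
proof (intro conjI ballI allI)
  fix y :: "nat \<Rightarrow> real" assume y: "y \<in> Rk n"
  show "0 \<le> mnorm n y" by (rule mnorm_nonneg[OF n])
  show "(mnorm n y = 0) = (y = (\<lambda>i. 0))"
  proof
    assume "mnorm n y = 0"
    then have "\<forall>l<n. y l = 0" using mnorm_ge[of _ n y] by force
    then show "y = (\<lambda>i. 0)"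
    proof (intro ext)
      fix i assume "\<forall>l<n. y l = 0"
      then show "y i = 0" using y by (cases "i < n") (auto simp: Rk_def)
    qed
  next
    assume "y = (\<lambda>i. 0)" then show "mnorm n y = 0" using mnorm_zero[OF n] by simp
  qed
next
  fix y :: "nat \<Rightarrow> real" and c :: real
  show "mnorm n (\<lambda>i. c * y i) = \<bar>c\<bar> * mnorm n y" by (rule mnorm_scale[OF n])
next
  fix y z :: "nat \<Rightarrow> real"
  show "mnorm n (\<lambda>i. y i + z i) \<le> mnorm n y + mnorm n z" by (rule mnorm_triangle[OF n])
qed

lemma c0norm_le: "(\<And>j. \<bar>x j\<bar> \<le> B) \<Longrightarrow> c0norm x \<le> B"
  unfolding c0norm_def by (rule cSUP_least) auto

lemma max_diff: "\<bar>max 0 (p::real) - max 0 q\<bar> \<le> \<bar>p - q\<bar>"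
  by (auto simp: max_def abs_if)

lemma core:
  fixes \<sigma> \<tau> :: "nat \<Rightarrow> real" and n :: nat and \<gamma> B :: real
  assumes n: "n \<ge> 1" and gam: "\<gamma> > 0"
    and tpos: "\<And>j. 0 \<le> \<tau> j" and tdec: "\<And>j. \<tau> (Suc j) \<le> \<tau> j" and t0: "\<tau> 0 \<le> \<gamma> / 2"
    and tsum: "\<And>J. (\<Sum>j<J. \<tau> j ^ n) \<le> (\<gamma> / 2) ^ n" and tlim: "\<tau> \<longlonglongrightarrow> 0"
    and err: "\<And>j. \<bar>\<sigma> j - \<tau> j\<bar> \<le> B" and B: "0 \<le> B"
  shows "lip_width \<gamma> n (Ksigma \<sigma>) \<le> ereal B"
proof -
  define t where "t j = \<tau> j / \<gamma>" for j
  have tnn: "0 \<le> t j" for j using tpos gam by (simp add: t_def)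
  have decs: "decseq \<tau>" using tdec by (rule decseq_SucI)
  have tmono: "i \<le> j \<Longrightarrow> t j \<le> t i" for i j
    using decs gam by (auto simp: t_def decseq_def divide_right_mono)
  have thalf: "t j \<le> 1/2" for j
  proof -
    have "\<tau> j \<le> \<gamma> / 2" using decs t0 by (metis decseq_def le0 order.trans)
    then show ?thesis using gam by (simp add: t_def field_simps)
  qed
  have tsum': "(\<Sum>i\<in>{..<J}. (2 * t i) ^ n) \<le> 1" for J
  proof -
    have "(\<Sum>i\<in>{..<J}. (2 * t i) ^ n) = (2 / \<gamma>) ^ n * (\<Sum>i<J. \<tau> i ^ n)"
      by (simp add: t_def sum_distrib_left power_mult_distrib[symmetric])
    also have "\<dots> \<le> (2 / \<gamma>) ^ n * (\<gamma> / 2) ^ n"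
      using tsum gam by (intro mult_left_mono) auto
    also have "\<dots> = 1" using gam by (simp add: power_mult_distrib[symmetric])
    finally show ?thesis .
  qed
  define good where "good j prev x \<longleftrightarrow> x \<in> Rk n \<and> (\<forall>l<n. -1 \<le> x l \<and> x l \<le> 1 - t j)
      \<and> (\<forall>i<j. \<exists>l<n. t i \<le> \<bar>x l - prev i l\<bar>)" for j and prev :: "nat \<Rightarrow> nat \<Rightarrow> real" and x
  have ex: "\<exists>x. good j prev x" for j prev
    using exists_point[OF n, of "{..<j}" t, OF _ _ tsum'[of j], of "t j" prev] tnn thalf
    unfolding good_def by auto
  define C :: "nat \<Rightarrow> nat \<Rightarrow> nat \<Rightarrow> real"
    where "C = rec_nat (\<lambda>_. \<lambda>_. 0) (\<lambda>j Cj. Cj(j := SOME x. good j Cj x))"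
  have CS: "C (Suc j) = (C j)(j := SOME x. good j (C j) x)" for j by (simp add: C_def)
  define c where "c j = C (Suc j) j" for j
  have Cc: "i < k \<Longrightarrow> C k i = c i" for i k
  proof (induction k)
    case 0 then show ?case by simp
  next
    case (Suc k) then show ?case
      by (cases "i = k") (auto simp: CS c_def)
  qed
  have cg: "good j (C j) (c j)" for j
    unfolding c_def CS using someI_ex[OF ex[of j "C j"]] by simp
  have cR: "c j \<in> Rk n" and cb: "\<And>l. l < n \<Longrightarrow> -1 \<le> c j l \<and> c j l \<le> 1 - t j"
    and cs: "\<And>i. i < j \<Longrightarrow> \<exists>l<n. t i \<le> \<bar>c j l - c i l\<bar>" for j
    using cg[of j] Cc[of _ j] unfolding good_def by auto
  have sep: "t i \<le> mnorm n (\<lambda>l. c j l - c i l)" if "i \<noteq> j" for i j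
  proof (cases "i < j")
    case True
    then obtain l where "l < n" "t i \<le> \<bar>c j l - c i l\<bar>" using cs by blast
    then show ?thesis using mnorm_ge[of l n "\<lambda>l. c j l - c i l"] by simp
  next
    case False
    then have "j < i" using that by simp
    then obtain l where l: "l < n" "t j \<le> \<bar>c i l - c j l\<bar>" using cs by blast
    have "t i \<le> t j" using \<open>j < i\<close> tmono by simp
    then show ?thesis using l mnorm_ge[of l n "\<lambda>l. c j l - c i l"] by (simp add: abs_minus_commute)
  qed
  define \<Phi> where "\<Phi> y = (\<lambda>j. max 0 (\<tau> j - \<gamma> * mnorm n (\<lambda>l. y l - c j l)))" for y
  have \<Phi>_bounds: "0 \<le> \<Phi> y j \<and> \<Phi> y j \<le> \<tau> j" for y j
    using mnorm_nonneg[OF n, of "\<lambda>l. y l - c j l"] gam tpos[of j]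
    by (auto simp: \<Phi>_def)
  have \<Phi>_c0: "\<Phi> y \<in> c0" for y
    unfolding c0_def
    by (auto intro!: tendsto_sandwich[OF _ _ tendsto_const tlim] simp: \<Phi>_bounds)
  have \<Phi>_lip: "c0norm (\<lambda>i. \<Phi> y i - \<Phi> y' i) \<le> \<gamma> * mnorm n (\<lambda>i. y i - y' i)" for y y'
  proof (rule c0norm_le)
    fix j
    have "\<bar>\<Phi> y j - \<Phi> y' j\<bar> \<le> \<bar>(\<tau> j - \<gamma> * mnorm n (\<lambda>l. y l - c j l)) - (\<tau> j - \<gamma> * mnorm n (\<lambda>l. y' l - c j l))\<bar>"
      unfolding \<Phi>_def by (rule max_diff)
    also have "\<dots> = \<gamma> * \<bar>mnorm n (\<lambda>l. y l - c j l) - mnorm n (\<lambda>l. y' l - c j l)\<bar>"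
      using gam by (simp add: abs_mult right_diff_distrib[symmetric] abs_minus_commute)
    also have "\<dots> \<le> \<gamma> * mnorm n (\<lambda>i. y i - y' i)"
      using gam mnorm_diff[OF n, of y "c j" y'] by (intro mult_left_mono) auto
    finally show "\<bar>\<Phi> y j - \<Phi> y' j\<bar> \<le> \<gamma> * mnorm n (\<lambda>i. y i - y' i)" .
  qed
  have \<Phi>_mem: "\<Phi> \<in> lip_maps \<gamma> n (mnorm n)"
    unfolding lip_maps_def using \<Phi>_c0 \<Phi>_lip by auto
  have approx: "\<exists>y\<in>unit_ball_Y n (mnorm n). c0norm (\<lambda>i. f i - \<Phi> y i) \<le> B" if f: "f \<in> Ksigma \<sigma>" for f
  proof -
    consider (e) j where "f = (\<lambda>i. \<sigma> j * unitvec j i)" | (z) "f = (\<lambda>i. 0)"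
      using f unfolding Ksigma_def by blast
    then show ?thesis
    proof cases
      case e
      have ball: "c j \<in> unit_ball_Y n (mnorm n)"
      proof -
        have "\<bar>c j l\<bar> \<le> 1" if "l < n" for l
          using cb[OF that, of j] tnn[of j] by (simp add: abs_le_iff)
        then show ?thesis
          unfolding unit_ball_Y_def using cR[of j] by (auto intro!: mnorm_le[OF n])
      qed
      have "c0norm (\<lambda>i. f i - \<Phi> (c j) i) \<le> B"
      proof (rule c0norm_le)
        fix i
        show "\<bar>f i - \<Phi> (c j) i\<bar> \<le> B"
        proof (cases "i = j")
          case True
          then show ?thesis using err[of j] tpos[of j]
            by (simp add: e unitvec_def \<Phi>_def mnorm_zero[OF n])
        next
          case False
          have "\<tau> i \<le> \<gamma> * mnorm n (\<lambda>l. c j l - c i l)"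
            using sep[OF False] gam by (simp add: t_def field_simps)
          then have "\<Phi> (c j) i = 0" by (simp add: \<Phi>_def)
          then show ?thesis using False B by (simp add: e unitvec_def)
        qed
      qed
      then show ?thesis using ball by blast
    next
      case z
      define w where "w = (\<lambda>l. if l < n then (1::real) else 0)"
      have ball: "w \<in> unit_ball_Y n (mnorm n)"
        unfolding unit_ball_Y_def by (auto simp: w_def Rk_def intro!: mnorm_le[OF n])
      have "c0norm (\<lambda>i. f i - \<Phi> w i) \<le> B"
      proof (rule c0norm_le)
        fix i
        have "0 < n" using n by simp
        have "t i \<le> \<bar>w 0 - c i 0\<bar>" using cb[OF \<open>0 < n\<close>, of i] \<open>0 < n\<close> by (auto simp: w_def abs_if)
        also have "\<dots> \<le> mnorm n (\<lambda>l. w l - c i l)" using mnorm_ge[OF \<open>0 < n\<close>, of "\<lambda>l. w l - c i l"] by simp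
        finally have "\<tau> i \<le> \<gamma> * mnorm n (\<lambda>l. w l - c i l)"
          using gam by (simp add: t_def field_simps)
        then have "\<Phi> w i = 0" by (simp add: \<Phi>_def)
        then show "\<bar>f i - \<Phi> w i\<bar> \<le> B" using B by (simp add: z)
      qed
      then show ?thesis using ball by blast
    qed
  qed
  have "dgamma \<gamma> (Ksigma \<sigma>) n (mnorm n) \<le> ereal B"
    unfolding dgamma_def
  proof (rule INF_lower2[OF \<Phi>_mem], rule SUP_least)
    fix f assume "f \<in> Ksigma \<sigma>"
    then obtain y where "y \<in> unit_ball_Y n (mnorm n)" "c0norm (\<lambda>i. f i - \<Phi> y i) \<le> B"
      using approx by blast
    then show "(INF y\<in>unit_ball_Y n (mnorm n). ereal (c0norm (\<lambda>i. f i - \<Phi> y i))) \<le> ereal B"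
      by (intro INF_lower2) auto
  qed
  moreover have "lip_width \<gamma> n (Ksigma \<sigma>) \<le> dgamma \<gamma> (Ksigma \<sigma>) n (mnorm n)"
    unfolding lip_width_def using n mnorm_is_norm[OF n]
    by (intro INF_lower2[of n] INF_lower) auto
  ultimately show ?thesis by (rule order.trans[rotated])
qed

theorem lemma4p9:
  fixes \<sigma> :: "nat \<Rightarrow> real" and n :: nat and \<gamma> :: real
  assumes dec: "\<And>j. \<sigma> (Suc j) < \<sigma> j"
    and lim: "\<sigma> \<longlonglongrightarrow> 0"
    and n: "n \<ge> 1"
    and gam: "\<gamma> > 0"
    and first: "\<sigma> 0 \<le> \<gamma> / 2"
  shows "(\<forall>N::nat. N \<ge> 1 \<longrightarrow> (\<Sum>j<N. \<sigma> j ^ n) \<le> (\<gamma> / 2) ^ n \<longrightarrow>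
            lip_width \<gamma> n (Ksigma \<sigma>) \<le> ereal (\<sigma> (N - 1)))
       \<and> (summable (\<lambda>j. \<sigma> j ^ n) \<and> (\<Sum>j. \<sigma> j ^ n) \<le> (\<gamma> / 2) ^ n \<longrightarrow>
            lip_width \<gamma> n (Ksigma \<sigma>) \<le> 0)"
proof (intro conjI allI impI)
  have ds: "decseq \<sigma>" using dec by (intro decseq_SucI less_imp_le)
  have spos: "0 \<le> \<sigma> j" for j using decseq_ge[OF ds lim] .
  have sdec: "i \<le> j \<Longrightarrow> \<sigma> j \<le> \<sigma> i" for i j using ds by (simp add: decseq_def)
  {
    fix N :: nat assume N: "N \<ge> 1" and S: "(\<Sum>j<N. \<sigma> j ^ n) \<le> (\<gamma> / 2) ^ n"
    define \<tau> where "\<tau> j = (if j < N then \<sigma> j else 0)" for j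
    show "lip_width \<gamma> n (Ksigma \<sigma>) \<le> ereal (\<sigma> (N - 1))"
    proof (rule core[OF n gam, of \<tau>])
      show "0 \<le> \<tau> j" for j using spos by (simp add: \<tau>_def)
      show "\<tau> (Suc j) \<le> \<tau> j" for j using spos sdec[of j "Suc j"] by (simp add: \<tau>_def)
      show "\<tau> 0 \<le> \<gamma> / 2" using first spos gam by (simp add: \<tau>_def)
      show "(\<Sum>j<J. \<tau> j ^ n) \<le> (\<gamma> / 2) ^ n" for J
      proof -
        have "(\<Sum>j<J. \<tau> j ^ n) = (\<Sum>j\<in>{..<J}. if j \<in> {..<N} then \<sigma> j ^ n else 0)"
          using n by (intro sum.cong) (auto simp: \<tau>_def)
        also have "\<dots> = (\<Sum>j\<in>{..<J} \<inter> {..<N}. \<sigma> j ^ n)" by (rule sum.inter_restrict[symmetric]) simp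
        also have "\<dots> \<le> (\<Sum>j<N. \<sigma> j ^ n)" using spos by (intro sum_mono2) auto
        finally show ?thesis using S by linarith
      qed
      show "\<tau> \<longlonglongrightarrow> 0"
        by (rule tendsto_sandwich[OF _ _ tendsto_const lim]) (auto simp: \<tau>_def spos)
      show "\<bar>\<sigma> j - \<tau> j\<bar> \<le> \<sigma> (N - 1)" for j
        using spos[of j] sdec[of "N - 1" j] spos[of "N - 1"] by (auto simp: \<tau>_def)
      show "0 \<le> \<sigma> (N - 1)" by (rule spos)
    qed
  }
  {
    assume S: "summable (\<lambda>j. \<sigma> j ^ n) \<and> (\<Sum>j. \<sigma> j ^ n) \<le> (\<gamma> / 2) ^ n"
    have "lip_width \<gamma> n (Ksigma \<sigma>) \<le> ereal 0"
    proof (rule core[OF n gam, of \<sigma>])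
      show "0 \<le> \<sigma> j" for j by (rule spos)
      show "\<sigma> (Suc j) \<le> \<sigma> j" for j using dec[of j] by simp
      show "\<sigma> 0 \<le> \<gamma> / 2" by (rule first)
      show "(\<Sum>j<J. \<sigma> j ^ n) \<le> (\<gamma> / 2) ^ n" for J
        using sum_le_suminf[of "\<lambda>j. \<sigma> j ^ n" "{..<J}"] S spos by (auto intro: order.trans)
      show "\<sigma> \<longlonglongrightarrow> 0" by (rule lim)
    qed auto
    then show "lip_width \<gamma> n (Ksigma \<sigma>) \<le> 0" by (simp add: zero_ereal_def)
  }
qed

end
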